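(* Let $(G,\theta)$ be a $p$-oriented profinite group and let $M$ be a Hilbert 90 module for $(G,\theta)$. Then $M$ is also a Hilbert 90 module for $(H,\theta|_H)$ for every closed subgroup $H$ of $G$.
   Context: A $p$-oriented profinite group is a pair $(G,\theta)$ with $G$ profinite and $\theta\colon G\to\mathbb Z_p^\times$ a continuous homomorphism. Let $S$ be the discrete $G$-module $\mathbb Q/\mathbb Z_{(p)}$ with $g$ acting by multiplication by $\theta(g)$. A Hilbert 90 module for $(G,\theta)$ is a discrete $G$-module $M$ such that (i) $pM=M$, (ii) the $p$-primary torsion subgroup $M\{p\}$ is isomorphic to $S$ as a $G$-module, and (iii) $H^1(H,M)=0$ for every open subgroup $H\subset G$. *)

theory Defs
  imports "HOL-Analysis.Analysis" "HOL-Algebra.Group"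
begin

section \<open>p-adic integers, represented as compatible residue sequences\<close>

definition zp :: "nat \<Rightarrow> (nat \<Rightarrow> int) set" where
  "zp p = {x. \<forall>n. 0 \<le> x n \<and> x n < int p ^ n \<and> x (Suc n) mod (int p ^ n) = x n}"

definition zp_one :: "nat \<Rightarrow> nat \<Rightarrow> int" where
  "zp_one p = (\<lambda>n. 1 mod (int p ^ n))"

definition zp_mult :: "nat \<Rightarrow> (nat \<Rightarrow> int) \<Rightarrow> (nat \<Rightarrow> int) \<Rightarrow> nat \<Rightarrow> int" where
  "zp_mult p x y = (\<lambda>n. (x n * y n) mod (int p ^ n))"

definition zp_units :: "nat \<Rightarrow> (nat \<Rightarrow> int) set" where
  "zp_units p = {x \<in> zp p. \<exists>y \<in> zp p. zp_mult p x y = zp_one p}"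

definition profinite_group :: "('g, 'b) monoid_scheme \<Rightarrow> 'g topology \<Rightarrow> bool" where
  "profinite_group G T \<longleftrightarrow> group G \<and> topspace T = carrier G \<and>
     compact_space T \<and> Hausdorff_space T \<and>
     (\<forall>x \<in> topspace T. connected_component_of_set T x = {x}) \<and>
     continuous_map (prod_topology T T) T (\<lambda>(x, y). x \<otimes>\<^bsub>G\<^esub> y) \<and>
     continuous_map T T (\<lambda>x. inv\<^bsub>G\<^esub> x)"

text \<open>Continuity into Z_p^x (p-adic topology): each residue map g |-> theta g n is locally constant.\<close>
definition p_oriented :: "nat \<Rightarrow> ('g, 'b) monoid_scheme \<Rightarrow> 'g topology \<Rightarrow> ('g \<Rightarrow> nat \<Rightarrow> int) \<Rightarrow> bool" where
  "p_oriented p G T \<theta> \<longleftrightarrow> prime p \<and> profinite_group G T \<and>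
     (\<forall>g \<in> carrier G. \<theta> g \<in> zp_units p) \<and>
     (\<forall>g \<in> carrier G. \<forall>h \<in> carrier G. \<theta> (g \<otimes>\<^bsub>G\<^esub> h) = zp_mult p (\<theta> g) (\<theta> h)) \<and>
     (\<forall>n a. openin T {g \<in> carrier G. \<theta> g n = a})"

definition discrete_module ::
  "('g, 'b) monoid_scheme \<Rightarrow> 'g topology \<Rightarrow> ('m, 'c) monoid_scheme \<Rightarrow> ('g \<Rightarrow> 'm \<Rightarrow> 'm) \<Rightarrow> bool" where
  "discrete_module G T M act \<longleftrightarrow> comm_group M \<and>
     (\<forall>g \<in> carrier G. act g \<in> hom M M) \<and>
     (\<forall>x \<in> carrier M. act \<one>\<^bsub>G\<^esub> x = x) \<and>
     (\<forall>g \<in> carrier G. \<forall>h \<in> carrier G. \<forall>x \<in> carrier M. act (g \<otimes>\<^bsub>G\<^esub> h) x = act g (act h x)) \<and>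
     (\<forall>x \<in> carrier M. openin T {g \<in> carrier G. act g x = x})"

section \<open>The module S = Q/Z_(p) (= Q_p/Z_p), with twisted action\<close>

definition S_carrier :: "nat \<Rightarrow> rat set" where
  "S_carrier p = {r. 0 \<le> r \<and> r < 1 \<and> (\<exists>k. r * of_nat p ^ k \<in> \<int>)}"

definition S_add :: "rat \<Rightarrow> rat \<Rightarrow> rat" where
  "S_add r s = frac (r + s)"

text \<open>Action of u in Z_p on r = a/p^k: u r = (u mod p^k) * r mod 1.\<close>
definition S_act :: "nat \<Rightarrow> (nat \<Rightarrow> int) \<Rightarrow> rat \<Rightarrow> rat" where
  "S_act p u r = frac (of_int (u (LEAST k. r * of_nat p ^ k \<in> \<int>)) * r)"

definition p_primary :: "nat \<Rightarrow> ('m, 'c) monoid_scheme \<Rightarrow> 'm set" where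
  "p_primary p M = {x \<in> carrier M. \<exists>k. x [^]\<^bsub>M\<^esub> (p ^ k) = \<one>\<^bsub>M\<^esub>}"

definition H1_vanishes ::
  "('g, 'b) monoid_scheme \<Rightarrow> 'g topology \<Rightarrow> ('m, 'c) monoid_scheme \<Rightarrow> ('g \<Rightarrow> 'm \<Rightarrow> 'm) \<Rightarrow> 'g set \<Rightarrow> bool" where
  "H1_vanishes G T M act K \<longleftrightarrow>
     (\<forall>f. (\<forall>g \<in> K. f g \<in> carrier M) \<and>
          (\<forall>g \<in> K. \<forall>h \<in> K. f (g \<otimes>\<^bsub>G\<^esub> h) = f g \<otimes>\<^bsub>M\<^esub> act g (f h)) \<and>
          (\<forall>x. openin (subtopology T K) {g \<in> K. f g = x})
        \<longrightarrow> (\<exists>m \<in> carrier M. \<forall>g \<in> K. f g = act g m \<otimes>\<^bsub>M\<^esub> inv\<^bsub>M\<^esub> m))"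

definition hilbert90_module ::
  "nat \<Rightarrow> ('g, 'b) monoid_scheme \<Rightarrow> 'g topology \<Rightarrow> ('g \<Rightarrow> nat \<Rightarrow> int) \<Rightarrow>
   ('m, 'c) monoid_scheme \<Rightarrow> ('g \<Rightarrow> 'm \<Rightarrow> 'm) \<Rightarrow> bool" where
  "hilbert90_module p G T \<theta> M act \<longleftrightarrow>
     discrete_module G T M act \<and>
     (\<forall>x \<in> carrier M. \<exists>y \<in> carrier M. y [^]\<^bsub>M\<^esub> p = x) \<and>
     (\<exists>\<phi>. bij_betw \<phi> (p_primary p M) (S_carrier p) \<and>
          (\<forall>x \<in> p_primary p M. \<forall>y \<in> p_primary p M. \<phi> (x \<otimes>\<^bsub>M\<^esub> y) = S_add (\<phi> x) (\<phi> y)) \<and>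
          (\<forall>g \<in> carrier G. \<forall>x \<in> p_primary p M. \<phi> (act g x) = S_act p (\<theta> g) (\<phi> x))) \<and>
     (\<forall>H. subgroup H G \<and> openin T H \<longrightarrow> H1_vanishes G T M act H)"

end

theory Submission
  imports Defs
begin

lemma pg_group: "profinite_group G T \<Longrightarrow> group G"
  by (simp add: profinite_group_def)

lemma pg_parts:
  assumes "profinite_group G T"
  shows pg_grp: "group G" and pg_ts: "topspace T = carrier G" and pg_cs: "compact_space T"
    and pg_hs: "Hausdorff_space T" and pg_cc: "\<forall>x \<in> topspace T. connected_component_of_set T x = {x}"
    and pg_cm: "continuous_map (prod_topology T T) T (\<lambda>(x, y). x \<otimes>\<^bsub>G\<^esub> y)"
    and pg_ci: "continuous_map T T (\<lambda>x. inv\<^bsub>G\<^esub> x)"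
  using assms unfolding profinite_group_def by - ((erule conjE)+, assumption)+

lemma pg_lmul:
  assumes "profinite_group G T" "a \<in> carrier G"
  shows "continuous_map T T (\<lambda>x. a \<otimes>\<^bsub>G\<^esub> x)"
proof -
  have c: "continuous_map (prod_topology T T) T (\<lambda>(x, y). x \<otimes>\<^bsub>G\<^esub> y)" and ts: "topspace T = carrier G"
    using assms(1) by (auto simp: profinite_group_def)
  have "continuous_map T (prod_topology T T) (\<lambda>x. (a, x))"
    by (intro continuous_map_pairedI continuous_map_const[THEN iffD2]) (auto simp: ts assms(2))
  from continuous_map_compose[OF this c] show ?thesis by (simp add: o_def)
qed

lemma pg_rmul:
  assumes "profinite_group G T" "a \<in> carrier G"
  shows "continuous_map T T (\<lambda>x. x \<otimes>\<^bsub>G\<^esub> a)"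
proof -
  have c: "continuous_map (prod_topology T T) T (\<lambda>(x, y). x \<otimes>\<^bsub>G\<^esub> y)" and ts: "topspace T = carrier G"
    using assms(1) by (auto simp: profinite_group_def)
  have "continuous_map T (prod_topology T T) (\<lambda>x. (x, a))"
    by (intro continuous_map_pairedI continuous_map_const[THEN iffD2]) (auto simp: ts assms(2))
  from continuous_map_compose[OF this c] show ?thesis by (simp add: o_def)
qed

lemma pg_open_lpre:
  assumes "profinite_group G T" "a \<in> carrier G" "openin T Op"
  shows "openin T {x \<in> carrier G. a \<otimes>\<^bsub>G\<^esub> x \<in> Op}"
  using openin_continuous_map_preimage[OF pg_lmul[OF assms(1,2)] assms(3)] assms(1)
  by (simp add: profinite_group_def)

lemma pg_open_conj:
  fixes G (structure)
  assumes "profinite_group G T" "a \<in> carrier G" "openin T Op"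
  shows "openin T {x \<in> carrier G. inv\<^bsub>G\<^esub> a \<otimes>\<^bsub>G\<^esub> x \<otimes>\<^bsub>G\<^esub> a \<in> Op}"
proof -
  interpret group G using pg_group[OF assms(1)] .
  have "continuous_map T T ((\<lambda>x. x \<otimes> a) \<circ> (\<lambda>x. inv a \<otimes> x))"
    by (rule continuous_map_compose[OF pg_lmul pg_rmul]) (use assms in \<open>auto intro: inv_closed\<close>)
  from openin_continuous_map_preimage[OF this assms(3)] assms(1)
  show ?thesis by (simp add: profinite_group_def o_def)
qed

lemma pg_open_inv:
  assumes "profinite_group G T" "openin T Op"
  shows "openin T {x \<in> carrier G. inv\<^bsub>G\<^esub> x \<in> Op}"
proof -
  note c = pg_ci[OF assms(1)] and ts = pg_ts[OF assms(1)]
  show ?thesis using openin_continuous_map_preimage[OF c assms(2)] ts by simp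
qed

lemma pg_open_subgroup:
  fixes G (structure)
  assumes "profinite_group G T" "subgroup S G" "openin T Op" "\<one>\<^bsub>G\<^esub> \<in> Op" "Op \<subseteq> S"
  shows "openin T S"
proof -
  interpret group G using pg_group[OF assms(1)] .
  show ?thesis
  proof (subst openin_subopen, intro ballI)
    fix s assume s: "s \<in> S"
    hence sc: "s \<in> carrier G" using assms(2) subgroup.subset by blast
    let ?Z = "{x \<in> carrier G. inv s \<otimes> x \<in> Op}"
    have "openin T ?Z" using pg_open_lpre[OF assms(1) _ assms(3)] sc by simp
    moreover have "s \<in> ?Z" using sc assms(4) by simp
    moreover have "?Z \<subseteq> S"
    proof
      fix x assume x: "x \<in> ?Z"
      hence "inv s \<otimes> x \<in> S" using assms(5) by auto
      hence "s \<otimes> (inv s \<otimes> x) \<in> S" by (rule subgroup.m_closed[OF assms(2) s])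
      thus "x \<in> S" using x sc by (simp add: m_assoc[symmetric])
    qed
    ultimately show "\<exists>Z. openin T Z \<and> s \<in> Z \<and> Z \<subseteq> S" by blast
  qed
qed


lemma pg_clopen:
  assumes pg: "profinite_group G T" and W: "openin T W" "\<one>\<^bsub>G\<^esub> \<in> W"
  shows "\<exists>C. closedin T C \<and> openin T C \<and> \<one>\<^bsub>G\<^esub> \<in> C \<and> C \<subseteq> W"
proof -
  note cs = pg_cs[OF pg] and hs = pg_hs[OF pg] and ts = pg_ts[OF pg] and cc = pg_cc[OF pg] and gr = pg_grp[OF pg]
  have one: "\<one>\<^bsub>G\<^esub> \<in> topspace T" using ts gr by (simp add: group.is_monoid monoid.one_closed)
  have "separated_between T {\<one>\<^bsub>G\<^esub>} (topspace T - W)"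
  proof (rule cut_wire_fence_theorem[OF cs hs])
    show "closedin T {\<one>\<^bsub>G\<^esub>}" using hs one by (simp add: Hausdorff_imp_t1_space closedin_t1_singleton)
    show "closedin T (topspace T - W)" using W by blast
    fix C assume "connectedin T C"
    show "disjnt C {\<one>\<^bsub>G\<^esub>} \<or> disjnt C (topspace T - W)"
    proof (cases "\<one>\<^bsub>G\<^esub> \<in> C")
      case True
      then have "C \<subseteq> {\<one>\<^bsub>G\<^esub>}" using connected_component_of_maximal[OF \<open>connectedin T C\<close> True] cc one by auto
      then show ?thesis using W(2) by (auto simp: disjnt_def)
    qed (auto simp: disjnt_def)
  qed
  then obtain U V where UV: "openin T U" "openin T V" "U \<union> V = topspace T" "disjnt U V" "{\<one>\<^bsub>G\<^esub>} \<subseteq> U" "topspace T - W \<subseteq> V"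
    unfolding separated_between_def by blast
  have "U = topspace T - V" using UV(3,4) by (auto simp: disjnt_def)
  hence "closedin T U" using UV(2) by auto
  moreover have "U \<subseteq> W" using UV(3,4,6) openin_subset[OF UV(1)] by (auto simp: disjnt_def)
  ultimately show ?thesis using UV by blast
qed

lemma pg_open_subgroup_in:
  fixes G (structure)
  assumes pg: "profinite_group G T" and W: "openin T W" "\<one> \<in> W"
  shows "\<exists>K. subgroup K G \<and> openin T K \<and> K \<subseteq> W"
proof -
  interpret group G using pg_group[OF pg] .
  note cs = pg_cs[OF pg] and ts = pg_ts[OF pg] and cm = pg_cm[OF pg]
  obtain C where C: "closedin T C" "openin T C" "\<one> \<in> C" "C \<subseteq> W" using pg_clopen[OF pg W] by blast
  have Cc: "C \<subseteq> carrier G" using closedin_subset[OF C(1)] ts by simp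
  define P where "P = {z \<in> topspace (prod_topology T T). (\<lambda>(x, y). x \<otimes> y) z \<in> C}"
  have Po: "openin (prod_topology T T) P" unfolding P_def
    by (rule openin_continuous_map_preimage[OF cm C(2)])
  have "C \<times> {\<one>} \<subseteq> P" using Cc by (auto simp: P_def ts)
  from tube_lemma_left[OF Po closedin_compact_space[OF cs C(1)] _ this]
  obtain U V where UV: "openin T U" "openin T V" "C \<subseteq> U" "\<one> \<in> V" "U \<times> V \<subseteq> P" using ts by auto
  define V' where "V' = V \<inter> {x \<in> carrier G. inv x \<in> V}"
  have V'o: "openin T V'" unfolding V'_def using UV(2) pg_open_inv[OF pg UV(2)] by blast
  define K where "K = {x \<in> carrier G. \<forall>c\<in>C. c \<otimes> x \<in> C \<and> c \<otimes> inv x \<in> C}"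
  have CV: "c \<otimes> v \<in> C" if "c \<in> C" "v \<in> V" for c v
  proof -
    have "(c, v) \<in> U \<times> V" using UV(3) that by auto
    thus ?thesis using UV(5) by (auto simp: P_def)
  qed
  have Ksub: "subgroup K G"
  proof (rule subgroupI)
    show "K \<subseteq> carrier G" by (auto simp: K_def)
    show "K \<noteq> {}" using Cc by (auto simp: K_def intro!: exI[of _ \<one>])
  next
    fix a assume "a \<in> K" thus "inv a \<in> K" by (auto simp: K_def)
  next
    fix a b assume a: "a \<in> K" and b: "b \<in> K"
    have ac: "a \<in> carrier G" and bc: "b \<in> carrier G" using a b by (auto simp: K_def)
    show "a \<otimes> b \<in> K" unfolding K_def
    proof (intro CollectI conjI ballI)
      show "a \<otimes> b \<in> carrier G" using ac bc by simp
      fix c assume c: "c \<in> C"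
      have cc: "c \<in> carrier G" using c Cc by auto
      have "c \<otimes> a \<in> C" using a c by (auto simp: K_def)
      hence "(c \<otimes> a) \<otimes> b \<in> C" using b by (auto simp: K_def)
      thus "c \<otimes> (a \<otimes> b) \<in> C" using ac bc cc by (simp add: m_assoc)
      have "c \<otimes> inv b \<in> C" using b c by (auto simp: K_def)
      hence "(c \<otimes> inv b) \<otimes> inv a \<in> C" using a by (auto simp: K_def)
      thus "c \<otimes> inv (a \<otimes> b) \<in> C" using ac bc cc by (simp add: m_assoc inv_mult_group)
    qed
  qed
  have "V' \<subseteq> K" unfolding K_def V'_def using CV by auto
  moreover have "\<one> \<in> V'" using UV(4) by (simp add: V'_def)
  ultimately have "openin T K" using pg_open_subgroup[OF pg Ksub V'o] by blast
  moreover have "K \<subseteq> W" using C(3,4) by (auto simp: K_def)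
  ultimately show ?thesis using Ksub by blast
qed

lemma pg_finite_cosets:
  fixes G (structure)
  assumes pg: "profinite_group G T" and K: "subgroup K G" "openin T K"
  shows "\<exists>F. finite F \<and> F \<subseteq> carrier G \<and> (\<forall>x\<in>carrier G. \<exists>g\<in>F. inv g \<otimes> x \<in> K)"
proof -
  interpret group G using pg_group[OF pg] .
  note cs = pg_cs[OF pg] and ts = pg_ts[OF pg]
  define Z where "Z g = {x \<in> carrier G. inv g \<otimes> x \<in> K}" for g
  have "\<forall>U \<in> Z ` carrier G. openin T U" unfolding Z_def using pg_open_lpre[OF pg _ K(2)] by auto
  moreover have "topspace T \<subseteq> \<Union> (Z ` carrier G)"
  proof
    fix x assume "x \<in> topspace T"
    hence x: "x \<in> carrier G" using ts by simp
    hence "x \<in> Z x" using K(1) by (simp add: Z_def subgroup.one_closed)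
    thus "x \<in> \<Union> (Z ` carrier G)" using x by blast
  qed
  ultimately obtain \<F> where F: "finite \<F>" "\<F> \<subseteq> Z ` carrier G" "topspace T \<subseteq> \<Union>\<F>"
    using cs unfolding compact_space_alt by meson
  then obtain F where "F \<subseteq> carrier G" "finite F" "\<F> = Z ` F" by (meson finite_subset_image)
  thus ?thesis using F(3) ts by (intro exI[of _ F]) (auto simp: Z_def)
qed

lemma pg_normal_in:
  fixes G (structure)
  assumes pg: "profinite_group G T" and W: "openin T W" "\<one> \<in> W"
  shows "\<exists>N. subgroup N G \<and> (\<forall>x\<in>carrier G. \<forall>h\<in>N. x \<otimes> h \<otimes> inv x \<in> N) \<and> openin T N \<and> N \<subseteq> W"
proof -
  interpret group G using pg_group[OF pg] .
  obtain K where K: "subgroup K G" "openin T K" "K \<subseteq> W" using pg_open_subgroup_in[OF pg W] by blast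
  obtain F where F: "finite F" "F \<subseteq> carrier G" "\<forall>x\<in>carrier G. \<exists>g\<in>F. inv g \<otimes> x \<in> K"
    using pg_finite_cosets[OF pg K(1,2)] by blast
  have Kc: "K \<subseteq> carrier G" using K(1) subgroup.subset by blast
  define N where "N = {x \<in> carrier G. \<forall>g\<in>carrier G. inv g \<otimes> x \<otimes> g \<in> K}"
  have conj_mult: "inv g \<otimes> (a \<otimes> b) \<otimes> g = (inv g \<otimes> a \<otimes> g) \<otimes> (inv g \<otimes> b \<otimes> g)"
    if "a \<in> carrier G" "b \<in> carrier G" "g \<in> carrier G" for a b g
  proof -
    have eq: "g \<otimes> (inv g \<otimes> (b \<otimes> g)) = b \<otimes> g" using that by (simp add: m_assoc[symmetric])
    show ?thesis using that by (simp add: m_assoc eq)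
  qed
  have Nsub: "subgroup N G"
  proof (rule subgroupI)
    show "N \<subseteq> carrier G" by (auto simp: N_def)
    show "N \<noteq> {}" using K(1) by (auto simp: N_def subgroup.one_closed intro!: exI[of _ \<one>])
  next
    fix a assume a: "a \<in> N"
    show "inv a \<in> N" unfolding N_def
    proof (intro CollectI conjI ballI)
      show "inv a \<in> carrier G" using a by (auto simp: N_def)
      fix g assume g: "g \<in> carrier G"
      have "inv g \<otimes> a \<otimes> g \<in> K" using a g by (auto simp: N_def)
      hence "inv (inv g \<otimes> a \<otimes> g) \<in> K" by (rule subgroup.m_inv_closed[OF K(1)])
      moreover have "inv (inv g \<otimes> a \<otimes> g) = inv g \<otimes> inv a \<otimes> g"
        using a g by (auto simp: N_def inv_mult_group m_assoc)
      ultimately show "inv g \<otimes> inv a \<otimes> g \<in> K" by simp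
    qed
  next
    fix a b assume a: "a \<in> N" and b: "b \<in> N"
    show "a \<otimes> b \<in> N" unfolding N_def
    proof (intro CollectI conjI ballI)
      show "a \<otimes> b \<in> carrier G" using a b by (auto simp: N_def)
      fix g assume g: "g \<in> carrier G"
      have "(inv g \<otimes> a \<otimes> g) \<otimes> (inv g \<otimes> b \<otimes> g) \<in> K"
        by (rule subgroup.m_closed[OF K(1)]) (use a b g in \<open>simp_all add: N_def\<close>)
      moreover have "inv g \<otimes> (a \<otimes> b) \<otimes> g = (inv g \<otimes> a \<otimes> g) \<otimes> (inv g \<otimes> b \<otimes> g)"
        by (rule conj_mult) (use a b g in \<open>simp_all add: N_def\<close>)
      ultimately show "inv g \<otimes> (a \<otimes> b) \<otimes> g \<in> K" by simp
    qed
  qed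
  have Nnorm: "\<forall>x\<in>carrier G. \<forall>h\<in>N. x \<otimes> h \<otimes> inv x \<in> N"
  proof (intro ballI)
    fix x h assume x: "x \<in> carrier G" and h: "h \<in> N"
    have hc: "h \<in> carrier G" using h by (simp add: N_def)
    show "x \<otimes> h \<otimes> inv x \<in> N" unfolding N_def
    proof (intro CollectI conjI ballI)
      show "x \<otimes> h \<otimes> inv x \<in> carrier G" using x hc by simp
      fix g assume g: "g \<in> carrier G"
      have "inv (inv x \<otimes> g) \<otimes> h \<otimes> (inv x \<otimes> g) \<in> K" using h x g by (simp add: N_def)
      moreover have "inv (inv x \<otimes> g) \<otimes> h \<otimes> (inv x \<otimes> g) = inv g \<otimes> (x \<otimes> h \<otimes> inv x) \<otimes> g"
        using x g hc by (simp add: inv_mult_group m_assoc)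
      ultimately show "inv g \<otimes> (x \<otimes> h \<otimes> inv x) \<otimes> g \<in> K" by simp
    qed
  qed
  have Neq: "N = carrier G \<inter> \<Inter> ((\<lambda>g. {x \<in> carrier G. inv g \<otimes> x \<otimes> g \<in> K}) ` F)"
  proof
    show "N \<subseteq> carrier G \<inter> \<Inter> ((\<lambda>g. {x \<in> carrier G. inv g \<otimes> x \<otimes> g \<in> K}) ` F)"
      using F(2) by (auto simp: N_def)
  next
    show "carrier G \<inter> \<Inter> ((\<lambda>g. {x \<in> carrier G. inv g \<otimes> x \<otimes> g \<in> K}) ` F) \<subseteq> N"
    proof
      fix x assume x: "x \<in> carrier G \<inter> \<Inter> ((\<lambda>g. {x \<in> carrier G. inv g \<otimes> x \<otimes> g \<in> K}) ` F)"
      show "x \<in> N" unfolding N_def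
      proof (intro CollectI conjI ballI)
        show xc: "x \<in> carrier G" using x by simp
        fix g assume g: "g \<in> carrier G"
        obtain g0 where g0: "g0 \<in> F" "inv g0 \<otimes> g \<in> K" using F(3) g by blast
        have g0c: "g0 \<in> carrier G" using g0 F(2) by auto
        define k where "k = inv g0 \<otimes> g"
        have kK: "k \<in> K" using g0 k_def by simp
        have kc: "k \<in> carrier G" using kK Kc by auto
        have gk: "g = g0 \<otimes> k" using g g0c by (simp add: k_def m_assoc[symmetric])
        have "inv g0 \<otimes> x \<otimes> g0 \<in> K" using x g0 by auto
        hence "inv k \<otimes> (inv g0 \<otimes> x \<otimes> g0) \<otimes> k \<in> K"
          using subgroup.m_closed[OF K(1) subgroup.m_closed[OF K(1) subgroup.m_inv_closed[OF K(1) kK]] kK] by blast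
        moreover have "inv k \<otimes> (inv g0 \<otimes> x \<otimes> g0) \<otimes> k = inv g \<otimes> x \<otimes> g"
          using gk g0c kc xc by (simp add: inv_mult_group m_assoc)
        ultimately show "inv g \<otimes> x \<otimes> g \<in> K" by simp
      qed
    qed
  qed
  have "openin T N"
  proof -
    note ts = pg_ts[OF pg]
    have "openin T (carrier G \<inter> \<Inter> ((\<lambda>g. {x \<in> carrier G. inv g \<otimes> x \<otimes> g \<in> K}) ` F))"
      apply (rule openin_Int_Inter)
      using F(1) apply simp
      using ts apply (metis openin_topspace)
      using pg_open_conj[OF pg _ K(2)] F(2) by auto
    thus ?thesis using Neq by simp
  qed
  moreover have "N \<subseteq> W"
  proof
    fix x assume "x \<in> N"
    hence "inv \<one> \<otimes> x \<otimes> \<one> \<in> K" by (auto simp: N_def)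
    hence "x \<in> K" using \<open>x \<in> N\<close> by (simp add: N_def)
    thus "x \<in> W" using K(3) by auto
  qed
  ultimately show ?thesis using Nsub Nnorm by blast
qed


lemma (in group) cancel_aux [simp]:
  "x \<in> carrier G \<Longrightarrow> y \<in> carrier G \<Longrightarrow> x \<otimes> (inv x \<otimes> y) = y"
  "x \<in> carrier G \<Longrightarrow> y \<in> carrier G \<Longrightarrow> inv x \<otimes> (x \<otimes> y) = y"
  by (simp_all add: m_assoc[symmetric])

lemma main_H1:
  fixes G (structure)
  assumes pg: "profinite_group G T" and dm: "discrete_module G T M act"
    and h90: "\<forall>V. subgroup V G \<and> openin T V \<longrightarrow> H1_vanishes G T M act V"
    and U: "subgroup U G"
  shows "H1_vanishes G T M act U"
  unfolding H1_vanishes_def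
proof (intro allI impI)
  interpret group G using pg_group[OF pg] .
  have cgM: "comm_group M" and acthom: "\<forall>g \<in> carrier G. act g \<in> hom M M"
    and act1: "\<forall>x \<in> carrier M. act \<one> x = x"
    and actm: "\<forall>g \<in> carrier G. \<forall>h \<in> carrier G. \<forall>x \<in> carrier M. act (g \<otimes> h) x = act g (act h x)"
    and stab: "\<forall>x \<in> carrier M. openin T {g \<in> carrier G. act g x = x}"
    using dm unfolding discrete_module_def by - ((erule conjE)+, assumption)+
  interpret M: comm_group M by (rule cgM)
  have actone: "act g \<one>\<^bsub>M\<^esub> = \<one>\<^bsub>M\<^esub>" if "g \<in> carrier G" for g
    using hom_one[OF bspec[OF acthom that] M.is_group M.is_group] .
  have actc: "act g x \<in> carrier M" if "g \<in> carrier G" "x \<in> carrier M" for g x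
    using hom_in_carrier[OF bspec[OF acthom that(1)] that(2)] .
  have Uc: "U \<subseteq> carrier G" using U subgroup.subset by blast
  have U1: "\<one> \<in> U" using U subgroup.one_closed by blast
  have Um: "a \<otimes> b \<in> U" if "a \<in> U" "b \<in> U" for a b using subgroup.m_closed[OF U that] .
  have Ui: "inv a \<in> U" if "a \<in> U" for a using subgroup.m_inv_closed[OF U that] .
  fix f
  assume "(\<forall>g\<in>U. f g \<in> carrier M) \<and> (\<forall>g\<in>U. \<forall>h\<in>U. f (g \<otimes> h) = f g \<otimes>\<^bsub>M\<^esub> act g (f h)) \<and>
       (\<forall>x. openin (subtopology T U) {g \<in> U. f g = x})"
  hence fM: "\<And>g. g \<in> U \<Longrightarrow> f g \<in> carrier M"
    and fco: "\<And>g h. g \<in> U \<Longrightarrow> h \<in> U \<Longrightarrow> f (g \<otimes> h) = f g \<otimes>\<^bsub>M\<^esub> act g (f h)"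
    and fcont: "\<And>x. openin (subtopology T U) {g \<in> U. f g = x}" by blast+
  have f1: "f \<one> = \<one>\<^bsub>M\<^esub>"
  proof -
    have "f \<one> = f \<one> \<otimes>\<^bsub>M\<^esub> f \<one>" using fco[OF U1 U1] act1 fM[OF U1] by simp
    thus ?thesis using fM[OF U1] by (metis M.l_cancel_one' M.one_closed)
  qed
  obtain O1 where O1: "openin T O1" "{g \<in> U. f g = \<one>\<^bsub>M\<^esub>} = O1 \<inter> U"
    using fcont[of "\<one>\<^bsub>M\<^esub>"] unfolding openin_subtopology by blast
  have one_O1: "\<one> \<in> O1" using O1(2) U1 f1 by blast
  have fO: "f g = \<one>\<^bsub>M\<^esub>" if "g \<in> U" "g \<in> O1" for g using O1(2) that by blast
  have fconst: "f v = f u" if "u \<in> U" "v \<in> U" "inv u \<otimes> v \<in> O1" for u v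
  proof -
    have w: "inv u \<otimes> v \<in> U" using that Um Ui by blast
    have uc: "u \<in> carrier G" "v \<in> carrier G" using that Uc by auto
    have "v = u \<otimes> (inv u \<otimes> v)" using uc by simp
    hence "f v = f u \<otimes>\<^bsub>M\<^esub> act u (f (inv u \<otimes> v))" using fco[OF that(1) w] by metis
    also have "\<dots> = f u" using fO[OF w that(3)] actone[OF uc(1)] fM[OF that(1)] by simp
    finally show ?thesis .
  qed
  obtain N1 where N1: "subgroup N1 G" "openin T N1" "N1 \<subseteq> O1"
    using pg_normal_in[OF pg O1(1) one_O1] by blast
  obtain F where F: "finite F" "F \<subseteq> carrier G" "\<forall>x\<in>carrier G. \<exists>g\<in>F. inv g \<otimes> x \<in> N1"
    using pg_finite_cosets[OF pg N1(1,2)] by blast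
  define rep where "rep g = (SOME u. u \<in> U \<and> inv g \<otimes> u \<in> N1)" for g
  define X where "X = f ` (rep ` F \<inter> U)"
  have Xfin: "finite X" using F(1) by (simp add: X_def)
  have fX: "f u \<in> X" if u: "u \<in> U" for u
  proof -
    obtain g where g: "g \<in> F" "inv g \<otimes> u \<in> N1" using F(3) u Uc by blast
    have gc: "g \<in> carrier G" using g F(2) by auto
    have "\<exists>u. u \<in> U \<and> inv g \<otimes> u \<in> N1" using g u by blast
    hence r: "rep g \<in> U" "inv g \<otimes> rep g \<in> N1" unfolding rep_def by (metis (mono_tags, lifting) someI_ex)+
    have rc: "rep g \<in> carrier G" using r Uc by auto
    have "inv (inv g \<otimes> rep g) \<otimes> (inv g \<otimes> u) \<in> N1"
      using subgroup.m_closed[OF N1(1) subgroup.m_inv_closed[OF N1(1) r(2)] g(2)] .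
    moreover have "inv (inv g \<otimes> rep g) \<otimes> (inv g \<otimes> u) = inv (rep g) \<otimes> u"
      using gc rc u Uc by (simp add: inv_mult_group m_assoc subsetD)
    ultimately have "inv (rep g) \<otimes> u \<in> O1" using N1(3) by auto
    hence "f u = f (rep g)" using fconst[OF r(1) u] by blast
    thus ?thesis using g(1) r(1) by (auto simp: X_def)
  qed
  have XM: "X \<subseteq> carrier M" using fM by (auto simp: X_def)
  define W2 where "W2 = O1 \<inter> \<Inter> ((\<lambda>x. {g \<in> carrier G. act g x = x}) ` X)"
  have W2o: "openin T W2" unfolding W2_def
    by (rule openin_Int_Inter) (use Xfin O1(1) stab XM in auto)
  have one_W2: "\<one> \<in> W2" unfolding W2_def using one_O1 act1 XM by auto
  obtain N where N: "subgroup N G" "\<forall>x\<in>carrier G. \<forall>h\<in>N. x \<otimes> h \<otimes> inv x \<in> N" "openin T N" "N \<subseteq> W2"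
    using pg_normal_in[OF pg W2o one_W2] by blast
  have Nc: "N \<subseteq> carrier G" using N(1) subgroup.subset by blast
  have N1': "\<one> \<in> N" using N(1) subgroup.one_closed by blast
  have Nm: "a \<otimes> b \<in> N" if "a \<in> N" "b \<in> N" for a b using subgroup.m_closed[OF N(1) that] .
  have Ni: "inv a \<in> N" if "a \<in> N" for a using subgroup.m_inv_closed[OF N(1) that] .
  have NO: "n \<in> O1" if "n \<in> N" for n using N(4) that by (auto simp: W2_def)
  have Nfix: "act n x = x" if "n \<in> N" "x \<in> X" for n x using N(4) that by (auto simp: W2_def)
  define V where "V = {g \<in> carrier G. \<exists>u\<in>U. inv u \<otimes> g \<in> N}"
  have Vsub: "subgroup V G"
  proof (rule subgroupI)
    show "V \<subseteq> carrier G" by (auto simp: V_def)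
    have "\<one> \<in> V" using U1 N1' by (auto simp: V_def intro!: bexI[of _ \<one>])
    thus "V \<noteq> {}" by blast
  next
    fix a assume "a \<in> V"
    then obtain u where a: "a \<in> carrier G" "u \<in> U" "inv u \<otimes> a \<in> N" by (auto simp: V_def)
    have uc: "u \<in> carrier G" using a Uc by auto
    have "u \<otimes> inv (inv u \<otimes> a) \<otimes> inv u \<in> N" using N(2) uc Ni[OF a(3)] by blast
    moreover have "u \<otimes> inv (inv u \<otimes> a) \<otimes> inv u = inv (inv u) \<otimes> inv a"
      using a uc by (simp add: inv_mult_group m_assoc)
    ultimately show "inv a \<in> V" using a Ui[OF a(2)] by (auto simp: V_def)
  next
    fix a b assume "a \<in> V" "b \<in> V"
    then obtain u u' where a: "a \<in> carrier G" "u \<in> U" "inv u \<otimes> a \<in> N"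
      and b: "b \<in> carrier G" "u' \<in> U" "inv u' \<otimes> b \<in> N" by (auto simp: V_def)
    have uc: "u \<in> carrier G" "u' \<in> carrier G" using a b Uc by auto
    have "inv u' \<otimes> (inv u \<otimes> a) \<otimes> inv (inv u') \<in> N" using N(2) uc a(3) by blast
    hence "(inv u' \<otimes> (inv u \<otimes> a) \<otimes> inv (inv u')) \<otimes> (inv u' \<otimes> b) \<in> N" using Nm b(3) by blast
    moreover have "(inv u' \<otimes> (inv u \<otimes> a) \<otimes> inv (inv u')) \<otimes> (inv u' \<otimes> b) = inv (u \<otimes> u') \<otimes> (a \<otimes> b)"
      using a b uc by (simp add: inv_mult_group m_assoc)
    ultimately show "a \<otimes> b \<in> V" using a b Um[OF a(2) b(2)] by (auto simp: V_def)
  qed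
  have Vo: "openin T V"
    by (rule pg_open_subgroup[OF pg Vsub N(3) N1']) (use Nc U1 in \<open>force simp: V_def intro!: bexI[of _ \<one>]\<close>)
  define F' where "F' g = f (SOME u. u \<in> U \<and> inv u \<otimes> g \<in> N)" for g
  have Fkey: "F' g = f u" if g: "g \<in> carrier G" "u \<in> U" "inv u \<otimes> g \<in> N" for g u
  proof -
    have "\<exists>u. u \<in> U \<and> inv u \<otimes> g \<in> N" using g by blast
    hence r: "(SOME u. u \<in> U \<and> inv u \<otimes> g \<in> N) \<in> U" "inv (SOME u. u \<in> U \<and> inv u \<otimes> g \<in> N) \<otimes> g \<in> N"
      by (metis (mono_tags, lifting) someI_ex)+
    define u' where "u' = (SOME u. u \<in> U \<and> inv u \<otimes> g \<in> N)"
    have r': "u' \<in> U" "inv u' \<otimes> g \<in> N" using r by (simp_all add: u'_def)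
    have uc: "u \<in> carrier G" "u' \<in> carrier G" using r' g Uc by auto
    have "(inv u' \<otimes> g) \<otimes> inv (inv u \<otimes> g) \<in> N" using Nm[OF r'(2) Ni[OF g(3)]] .
    moreover have "(inv u' \<otimes> g) \<otimes> inv (inv u \<otimes> g) = inv u' \<otimes> u"
      using uc g by (simp add: inv_mult_group m_assoc)
    ultimately have "inv u' \<otimes> u \<in> O1" using NO by auto
    hence "f u = f u'" using fconst[OF r'(1) g(2)] by blast
    thus ?thesis by (simp add: F'_def u'_def)
  qed
  have Vex: "\<exists>u\<in>U. inv u \<otimes> g \<in> N" if "g \<in> V" for g using that by (auto simp: V_def)
  have VcG: "V \<subseteq> carrier G" by (auto simp: V_def)
  have F'M: "\<forall>g\<in>V. F' g \<in> carrier M"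
  proof
    fix g assume gV: "g \<in> V"
    obtain u where u: "u \<in> U" "inv u \<otimes> g \<in> N" using Vex[OF gV] by blast
    have "g \<in> carrier G" using gV VcG by auto
    thus "F' g \<in> carrier M" using Fkey[OF _ u] fM[OF u(1)] by simp
  qed
  have F'co: "\<forall>g\<in>V. \<forall>h\<in>V. F' (g \<otimes> h) = F' g \<otimes>\<^bsub>M\<^esub> act g (F' h)"
  proof (intro ballI)
    fix g h assume gV: "g \<in> V" and hV: "h \<in> V"
    obtain u where u: "u \<in> U" "inv u \<otimes> g \<in> N" using Vex[OF gV] by blast
    obtain u' where u': "u' \<in> U" "inv u' \<otimes> h \<in> N" using Vex[OF hV] by blast
    have gc: "g \<in> carrier G" and hc: "h \<in> carrier G" using gV hV VcG by auto
    have uc: "u \<in> carrier G" "u' \<in> carrier G" using u u' Uc by auto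
    have "inv u' \<otimes> (inv u \<otimes> g) \<otimes> inv (inv u') \<in> N" using N(2) uc u(2) by blast
    hence "(inv u' \<otimes> (inv u \<otimes> g) \<otimes> inv (inv u')) \<otimes> (inv u' \<otimes> h) \<in> N" using Nm u'(2) by blast
    moreover have "(inv u' \<otimes> (inv u \<otimes> g) \<otimes> inv (inv u')) \<otimes> (inv u' \<otimes> h) = inv (u \<otimes> u') \<otimes> (g \<otimes> h)"
      using gc hc uc by (simp add: inv_mult_group m_assoc)
    ultimately have e1: "F' (g \<otimes> h) = f (u \<otimes> u')" using Fkey[OF _ Um[OF u(1) u'(1)]] gc hc by simp
    have e2: "F' g = f u" using Fkey[OF gc u] .
    have e3: "F' h = f u'" using Fkey[OF hc u'] .
    have "act g (f u') = act (u \<otimes> (inv u \<otimes> g)) (f u')" using uc gc by simp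
    also have "\<dots> = act u (act (inv u \<otimes> g) (f u'))" using actm uc gc Nc u(2) fM[OF u'(1)] by blast
    also have "act (inv u \<otimes> g) (f u') = f u'" using Nfix[OF u(2) fX[OF u'(1)]] .
    finally have "act g (f u') = act u (f u')" .
    thus "F' (g \<otimes> h) = F' g \<otimes>\<^bsub>M\<^esub> act g (F' h)" using e1 e2 e3 fco[OF u(1) u'(1)] by simp
  qed
  have F'cont: "\<forall>x. openin (subtopology T V) {g \<in> V. F' g = x}"
  proof
    fix x
    have "openin T {g \<in> V. F' g = x}"
    proof (subst openin_subopen, intro ballI)
      fix g assume "g \<in> {g \<in> V. F' g = x}"
      hence gV: "g \<in> V" and gx: "F' g = x" by auto
      have gc: "g \<in> carrier G" using gV VcG by auto
      obtain u where u: "u \<in> U" "inv u \<otimes> g \<in> N" using Vex[OF gV] by blast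
      have uc: "u \<in> carrier G" using u Uc by auto
      let ?Z = "{y \<in> carrier G. inv g \<otimes> y \<in> N}"
      have "openin T ?Z" using pg_open_lpre[OF pg _ N(3)] gc by simp
      moreover have "g \<in> ?Z" using gc N1' by simp
      moreover have "?Z \<subseteq> {g \<in> V. F' g = x}"
      proof
        fix y assume y: "y \<in> ?Z"
        have yc: "y \<in> carrier G" using y by simp
        have "(inv u \<otimes> g) \<otimes> (inv g \<otimes> y) \<in> N" using Nm u(2) y by blast
        moreover have "(inv u \<otimes> g) \<otimes> (inv g \<otimes> y) = inv u \<otimes> y" using uc gc yc by (simp add: m_assoc)
        ultimately have uy: "inv u \<otimes> y \<in> N" by simp
        hence "y \<in> V" using yc u(1) by (auto simp: V_def)
        moreover have "F' y = x" using Fkey[OF yc u(1) uy] Fkey[OF gc u] gx by simp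
        ultimately show "y \<in> {g \<in> V. F' g = x}" by simp
      qed
      ultimately show "\<exists>Z. openin T Z \<and> g \<in> Z \<and> Z \<subseteq> {g \<in> V. F' g = x}" by blast
    qed
    thus "openin (subtopology T V) {g \<in> V. F' g = x}"
      using openin_open_subtopology[OF Vo] by auto
  qed
  obtain m where m: "m \<in> carrier M" "\<forall>g\<in>V. F' g = act g m \<otimes>\<^bsub>M\<^esub> inv\<^bsub>M\<^esub> m"
  proof -
    have "H1_vanishes G T M act V" using h90 Vsub Vo by blast
    hence "\<exists>m\<in>carrier M. \<forall>g\<in>V. F' g = act g m \<otimes>\<^bsub>M\<^esub> inv\<^bsub>M\<^esub> m"
      unfolding H1_vanishes_def using F'M F'co F'cont by (elim allE[of _ F'] impE) (intro conjI; assumption)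
    thus ?thesis using that by blast
  qed
  show "\<exists>m\<in>carrier M. \<forall>g\<in>U. f g = act g m \<otimes>\<^bsub>M\<^esub> inv\<^bsub>M\<^esub> m"
  proof (intro bexI[OF _ m(1)] ballI)
    fix g assume g: "g \<in> U"
    have gc: "g \<in> carrier G" using g Uc by auto
    have gN: "inv g \<otimes> g \<in> N" using gc N1' by simp
    have "g \<in> V" unfolding V_def using gc g gN by blast
    thus "f g = act g m \<otimes>\<^bsub>M\<^esub> inv\<^bsub>M\<^esub> m" using m(2) Fkey[OF gc g gN] by simp
  qed
qed


theorem lemma2p5:
  fixes p :: nat and G :: "('g, 'b) monoid_scheme" and T :: "'g topology"
    and \<theta> :: "'g \<Rightarrow> nat \<Rightarrow> int"
    and M :: "('m, 'c) monoid_scheme" and act :: "'g \<Rightarrow> 'm \<Rightarrow> 'm"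
    and H :: "'g set"
  assumes "p_oriented p G T \<theta>"
    and "hilbert90_module p G T \<theta> M act"
    and "subgroup H G" and "closedin T H"
  shows "hilbert90_module p (G\<lparr>carrier := H\<rparr>) (subtopology T H) \<theta> M act"
proof -
  have pg: "profinite_group G T" using assms(1) unfolding p_oriented_def by blast
  interpret G: group G using pg_group[OF pg] .
  have Hc: "H \<subseteq> carrier G" using assms(3) subgroup.subset by blast
  have dm: "discrete_module G T M act"
    and dv: "\<forall>x \<in> carrier M. \<exists>y \<in> carrier M. y [^]\<^bsub>M\<^esub> p = x"
    and ph: "\<exists>\<phi>. bij_betw \<phi> (p_primary p M) (S_carrier p) \<and>
          (\<forall>x \<in> p_primary p M. \<forall>y \<in> p_primary p M. \<phi> (x \<otimes>\<^bsub>M\<^esub> y) = S_add (\<phi> x) (\<phi> y)) \<and>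
          (\<forall>g \<in> carrier G. \<forall>x \<in> p_primary p M. \<phi> (act g x) = S_act p (\<theta> g) (\<phi> x))"
    and h90: "\<forall>V. subgroup V G \<and> openin T V \<longrightarrow> H1_vanishes G T M act V"
    using assms(2) unfolding hilbert90_module_def by - ((erule conjE)+, assumption)+
  have cgM: "comm_group M" and acthom: "\<forall>g \<in> carrier G. act g \<in> hom M M"
    and act1: "\<forall>x \<in> carrier M. act \<one>\<^bsub>G\<^esub> x = x"
    and actm: "\<forall>g \<in> carrier G. \<forall>h \<in> carrier G. \<forall>x \<in> carrier M. act (g \<otimes>\<^bsub>G\<^esub> h) x = act g (act h x)"
    and stab: "\<forall>x \<in> carrier M. openin T {g \<in> carrier G. act g x = x}"
    using dm unfolding discrete_module_def by - ((erule conjE)+, assumption)+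
  have dm': "discrete_module (G\<lparr>carrier := H\<rparr>) (subtopology T H) M act"
    unfolding discrete_module_def
  proof (intro conjI ballI)
    show "comm_group M" by (rule cgM)
    fix x assume x: "x \<in> carrier M"
    show "act \<one>\<^bsub>G\<lparr>carrier := H\<rparr>\<^esub> x = x" using act1 x by simp
    have "{g \<in> carrier (G\<lparr>carrier := H\<rparr>). act g x = x} = {g \<in> carrier G. act g x = x} \<inter> H"
      using Hc by auto
    thus "openin (subtopology T H) {g \<in> carrier (G\<lparr>carrier := H\<rparr>). act g x = x}"
      unfolding openin_subtopology using stab x by blast
  next
    fix g assume "g \<in> carrier (G\<lparr>carrier := H\<rparr>)"
    thus "act g \<in> hom M M" using acthom Hc by auto
  next
    fix g h x assume "g \<in> carrier (G\<lparr>carrier := H\<rparr>)" "h \<in> carrier (G\<lparr>carrier := H\<rparr>)" "x \<in> carrier M"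
    thus "act (g \<otimes>\<^bsub>G\<lparr>carrier := H\<rparr>\<^esub> h) x = act g (act h x)" using actm Hc by auto
  qed
  have ph': "\<exists>\<phi>. bij_betw \<phi> (p_primary p M) (S_carrier p) \<and>
          (\<forall>x \<in> p_primary p M. \<forall>y \<in> p_primary p M. \<phi> (x \<otimes>\<^bsub>M\<^esub> y) = S_add (\<phi> x) (\<phi> y)) \<and>
          (\<forall>g \<in> carrier (G\<lparr>carrier := H\<rparr>). \<forall>x \<in> p_primary p M. \<phi> (act g x) = S_act p (\<theta> g) (\<phi> x))"
  proof -
    obtain \<phi> where "bij_betw \<phi> (p_primary p M) (S_carrier p)"
      "\<forall>x \<in> p_primary p M. \<forall>y \<in> p_primary p M. \<phi> (x \<otimes>\<^bsub>M\<^esub> y) = S_add (\<phi> x) (\<phi> y)"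
      "\<forall>g \<in> carrier G. \<forall>x \<in> p_primary p M. \<phi> (act g x) = S_act p (\<theta> g) (\<phi> x)"
      using ph by blast
    thus ?thesis using Hc by (intro exI[of _ \<phi>]) auto
  qed
  have h90': "\<forall>U. subgroup U (G\<lparr>carrier := H\<rparr>) \<and> openin (subtopology T H) U \<longrightarrow>
      H1_vanishes (G\<lparr>carrier := H\<rparr>) (subtopology T H) M act U"
  proof (intro allI impI)
    fix U assume U: "subgroup U (G\<lparr>carrier := H\<rparr>) \<and> openin (subtopology T H) U"
    have UG: "subgroup U G" using G.incl_subgroup[OF assms(3)] U by blast
    have UH: "U \<subseteq> H" using U subgroup.subset by force
    have "H1_vanishes G T M act U" by (rule main_H1[OF pg dm h90 UG])
    moreover have "subtopology (subtopology T H) U = subtopology T U"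
      using UH by (simp add: subtopology_subtopology Int_absorb1)
    ultimately show "H1_vanishes (G\<lparr>carrier := H\<rparr>) (subtopology T H) M act U"
      unfolding H1_vanishes_def by simp
  qed
  show ?thesis unfolding hilbert90_module_def
    using dm' dv ph' h90' by blast
qed

end
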